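(* Let $A=\mathrm{diag}(G_1,\dots,G_m,[1])\in\mathbb{R}^{n\times n}$ (where the trailing $1\times 1$ block $[1]$ may or may not be present), with $G_j=\begin{bmatrix}c_j&s_j\\-s_j&c_j\end{bmatrix}$, $c_j^2+s_j^2=1$, $s_j\neq 0$, and $0<c_1<c_2<\cdots<c_m$. Let $v_0\in\mathbb{R}^n$ be a unit norm vector with $d(A,v_0)\geq 2$, and consider the iteration ACI($1$): $$\widetilde w_k=(A-\alpha_kI)v_k,\ \alpha_k=v_k^TAv_k,\quad w_k=\widetilde w_k/\|\widetilde w_k\|,\quad \widetilde v_{k+1}=(A^T-\beta_kI)w_k,\ \beta_k=w_k^TAw_k,\quad v_{k+1}=\widetilde v_{k+1}/\|\widetilde v_{k+1}\|.$$ Then the sequences $\{\alpha_k\}$ and $\{\beta_k\}$ converge to limits $\alpha$ and $\beta$ with $\alpha=\beta$, this common value is the real part of an eigenvalue of $A$ (namely $\alpha=\beta=c_j$ for some $j\in\{1,\dots,m\}$), and every limit vector $v_*$ of the sequence $\{v_k\}$ satisfies $d(A,v_* )=2$.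
   Context: $d(A,v)$ denotes the grade of $v$ w.r.t. $A$, i.e. the degree of the monic polynomial $p$ of smallest degree with $p(A)v=0$. $\|\cdot\|$ is the Euclidean norm. $A$ is orthogonal; under the hypotheses all vectors $\widetilde w_k,\widetilde v_{k+1}$ are nonzero. *)

theory Defs
  imports Complex_Main "HOL-Computational_Algebra.Polynomial"
begin

text \<open>Vectors in R^n are represented as functions nat => real, only indices i < n matter;
  n x n matrices as functions nat => nat => real.\<close>

definition dimA :: "nat \<Rightarrow> bool \<Rightarrow> nat" where
  "dimA m t = 2 * m + (if t then 1 else 0)"

text \<open>A = diag(G_0,...,G_{m-1},[1]) (trailing block present iff t), with
  G_j = [[c j, s j], [- s j, c j]]; entries outside the n x n range are 0.\<close>
definition rotA :: "nat \<Rightarrow> bool \<Rightarrow> (nat \<Rightarrow> real) \<Rightarrow> (nat \<Rightarrow> real) \<Rightarrow> nat \<Rightarrow> nat \<Rightarrow> real" where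
  "rotA m t c s i j =
     (if i < 2 * m \<and> j < 2 * m \<and> i div 2 = j div 2 then
        (if i = j then c (i div 2)
         else if even i then s (i div 2) else - s (i div 2))
      else if t \<and> i = 2 * m \<and> j = 2 * m then 1 else 0)"

definition mvec :: "nat \<Rightarrow> (nat \<Rightarrow> nat \<Rightarrow> real) \<Rightarrow> (nat \<Rightarrow> real) \<Rightarrow> nat \<Rightarrow> real" where
  "mvec n M x = (\<lambda>i. \<Sum>j<n. M i j * x j)"

definition mtrans :: "(nat \<Rightarrow> nat \<Rightarrow> real) \<Rightarrow> nat \<Rightarrow> nat \<Rightarrow> real" where
  "mtrans M = (\<lambda>i j. M j i)"

definition vinner :: "nat \<Rightarrow> (nat \<Rightarrow> real) \<Rightarrow> (nat \<Rightarrow> real) \<Rightarrow> real" where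
  "vinner n x y = (\<Sum>i<n. x i * y i)"

definition vnorm :: "nat \<Rightarrow> (nat \<Rightarrow> real) \<Rightarrow> real" where
  "vnorm n x = sqrt (vinner n x x)"

definition poly_mvec :: "nat \<Rightarrow> real poly \<Rightarrow> (nat \<Rightarrow> nat \<Rightarrow> real) \<Rightarrow> (nat \<Rightarrow> real) \<Rightarrow> nat \<Rightarrow> real" where
  "poly_mvec n p M x = (\<lambda>i. \<Sum>k\<le>degree p. coeff p k * ((mvec n M ^^ k) x) i)"

definition grade :: "nat \<Rightarrow> (nat \<Rightarrow> nat \<Rightarrow> real) \<Rightarrow> (nat \<Rightarrow> real) \<Rightarrow> nat" where
  "grade n M x = (LEAST d. \<exists>p. lead_coeff p = 1 \<and> degree p = d \<and>
                        (\<forall>i<n. poly_mvec n p M x i = 0))"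

primrec aci :: "nat \<Rightarrow> (nat \<Rightarrow> nat \<Rightarrow> real) \<Rightarrow> (nat \<Rightarrow> real) \<Rightarrow> nat \<Rightarrow> (nat \<Rightarrow> real) \<times> (nat \<Rightarrow> real)" where
  "aci n M v0 0 =
     (let v = v0; al = vinner n v (mvec n M v);
          wt = (\<lambda>i. mvec n M v i - al * v i)
      in (v, (\<lambda>i. wt i / vnorm n wt)))"
| "aci n M v0 (Suc k) =
     (let w = snd (aci n M v0 k); be = vinner n w (mvec n M w);
          vt = (\<lambda>i. mvec n (mtrans M) w i - be * w i);
          v = (\<lambda>i. vt i / vnorm n vt);
          al = vinner n v (mvec n M v);
          wt = (\<lambda>i. mvec n M v i - al * v i)
      in (v, (\<lambda>i. wt i / vnorm n wt)))"

definition aci_v where "aci_v n M v0 k = fst (aci n M v0 k)"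
definition aci_w where "aci_w n M v0 k = snd (aci n M v0 k)"
definition aci_alpha where "aci_alpha n M v0 k = vinner n (aci_v n M v0 k) (mvec n M (aci_v n M v0 k))"
definition aci_beta where "aci_beta n M v0 k = vinner n (aci_w n M v0 k) (mvec n M (aci_w n M v0 k))"

end

theory Submission
  imports Defs
begin

lemma sum_blocks: "(\<Sum>i<2*m. g i) = (\<Sum>j<m. g (2*j) + g (Suc (2*j))::real)"
  by (induction m) (simp_all add: lessThan_Suc add.assoc)

lemma sum_dimA: "(\<Sum>i<dimA m t. g i) = (\<Sum>j<m. g (2*j) + g (Suc (2*j))) + of_bool t * (g (2*m)::real)"
  by (cases t) (simp_all add: dimA_def sum_blocks lessThan_Suc)

lemma sum_if2: "(\<Sum>l<(m::nat). (if l = j then a else 0) * f l + (if l = j then b else 0) * g l) = (if j < m then a * f j + b * g j else (0::real))"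
proof -
  have "(\<Sum>l<m. (if l = j then a else 0) * f l + (if l = j then b else 0) * g l) = (\<Sum>l<m. if l = j then a * f l + b * g l else 0)"
    by (intro sum.cong) auto
  also have "\<dots> = (if j \<in> {..<m} then a * f j + b * g j else 0)"
    by (rule sum.delta) simp
  finally show ?thesis by simp
qed

lemma e1: "j < m \<Longrightarrow> rotA m t c s (2*j) (2*l) = (if l = j then c j else 0)"
  by (auto simp: rotA_def)
lemma e2: "j < m \<Longrightarrow> rotA m t c s (2*j) (Suc (2*l)) = (if l = j then s j else 0)"
  by (auto simp: rotA_def)
lemma e3: "j < m \<Longrightarrow> rotA m t c s (Suc (2*j)) (2*l) = (if l = j then - s j else 0)"
  by (auto simp: rotA_def)
lemma e4: "j < m \<Longrightarrow> rotA m t c s (Suc (2*j)) (Suc (2*l)) = (if l = j then c j else 0)"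
  by (auto simp: rotA_def)
lemma e5: "j < m \<Longrightarrow> rotA m t c s (2*j) (2*m) = 0" "j < m \<Longrightarrow> rotA m t c s (Suc (2*j)) (2*m) = 0"
  "l < m \<Longrightarrow> rotA m t c s (2*m) (2*l) = 0" "l < m \<Longrightarrow> rotA m t c s (2*m) (Suc (2*l)) = 0" "rotA m t c s (2*m) (2*m) = (if t then 1 else 0)"
  by (auto simp: rotA_def)

lemma f1: "j < m \<Longrightarrow> rotA m t c s (2*l) (2*j) = (if l = j then c j else 0)"
  by (auto simp: rotA_def)
lemma f2: "j < m \<Longrightarrow> rotA m t c s (Suc (2*l)) (2*j) = (if l = j then - s j else 0)"
  by (auto simp: rotA_def)
lemma f3: "j < m \<Longrightarrow> rotA m t c s (2*l) (Suc (2*j)) = (if l = j then s j else 0)"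
  by (auto simp: rotA_def)
lemma f4: "j < m \<Longrightarrow> rotA m t c s (Suc (2*l)) (Suc (2*j)) = (if l = j then c j else 0)"
  by (auto simp: rotA_def)


lemma aci_v0: "aci_v n M v0 0 = v0"
  by (simp add: aci_v_def Let_def)

lemma aci_w_eq: "aci_w n M v0 k = (let y = (\<lambda>i. mvec n M (aci_v n M v0 k) i - aci_alpha n M v0 k * aci_v n M v0 k i) in (\<lambda>i. y i / vnorm n y))"
  by (cases k) (simp_all add: aci_v_def aci_w_def aci_alpha_def Let_def)

lemma aci_v_Suc: "aci_v n M v0 (Suc k) = (let y = (\<lambda>i. mvec n (mtrans M) (aci_w n M v0 k) i - aci_beta n M v0 k * aci_w n M v0 k i) in (\<lambda>i. y i / vnorm n y))"
  by (simp add: aci_v_def aci_w_def aci_beta_def Let_def)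

locale rs =
  fixes m :: nat and t :: bool and c s :: "nat \<Rightarrow> real"
  assumes rot: "\<And>j. j < m \<Longrightarrow> (c j)\<^sup>2 + (s j)\<^sup>2 = 1"
    and snz: "\<And>j. j < m \<Longrightarrow> s j \<noteq> 0"
    and cpos: "0 < m \<Longrightarrow> 0 < c 0"
    and cinc: "\<And>i j. i < j \<Longrightarrow> j < m \<Longrightarrow> c i < c j"
begin

abbreviation "N \<equiv> dimA m t"
abbreviation "A \<equiv> rotA m t c s"

lemma mvec_split: "mvec N M x i = (\<Sum>l<m. M i (2*l) * x (2*l) + M i (Suc (2*l)) * x (Suc (2*l))) + of_bool t * (M i (2*m) * x (2*m))"
  by (simp only: mvec_def sum_dimA)

lemma mvA0: "j < m \<Longrightarrow> mvec N A x (2*j) = c j * x (2*j) + s j * x (Suc (2*j))"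
  by (simp add: mvec_split e1 e2 e5 sum_if2 split del: if_split)
lemma mvA1: "j < m \<Longrightarrow> mvec N A x (Suc (2*j)) = - s j * x (2*j) + c j * x (Suc (2*j))"
  by (simp add: mvec_split e3 e4 e5 sum_if2 split del: if_split)
lemma mvA2: "t \<Longrightarrow> mvec N A x (2*m) = x (2*m)"
  unfolding mvec_split by (simp add: e5)
lemma mvT0: "j < m \<Longrightarrow> mvec N (mtrans A) x (2*j) = c j * x (2*j) - s j * x (Suc (2*j))"
  by (simp add: mvec_split mtrans_def f1 f2 e5 sum_if2 split del: if_split)
lemma mvT1: "j < m \<Longrightarrow> mvec N (mtrans A) x (Suc (2*j)) = s j * x (2*j) + c j * x (Suc (2*j))"
  by (simp add: mvec_split mtrans_def f3 f4 e5 sum_if2 split del: if_split)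
lemma mvT2: "t \<Longrightarrow> mvec N (mtrans A) x (2*m) = x (2*m)"
  unfolding mvec_split by (simp add: e5 mtrans_def)

definition CC :: "nat \<Rightarrow> real" where "CC j = (if j < m then c j else 1)"
definition wt :: "(nat \<Rightarrow> real) \<Rightarrow> nat \<Rightarrow> real" where
  "wt x j = (if j < m then (x (2*j))\<^sup>2 + (x (Suc (2*j)))\<^sup>2 else if t then (x (2*m))\<^sup>2 else 0)"
definition F :: "real \<Rightarrow> real \<Rightarrow> real" where "F a cc = 1 + a\<^sup>2 - 2*a*cc"

lemma sum_atMost_m: "(\<Sum>j\<le>m. g j) = (\<Sum>j<m. g j) + (g m::real)"
  by (simp add: lessThan_Suc_atMost[symmetric])

lemma wt_nonneg: "0 \<le> wt x j" by (simp add: wt_def)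

lemma vin_self: "vinner N x x = (\<Sum>j\<le>m. wt x j)"
proof -
  have "(\<Sum>j<m. wt x j) = (\<Sum>j<m. x (2*j) * x (2*j) + x (Suc (2*j)) * x (Suc (2*j)))"
    by (intro sum.cong) (auto simp: wt_def power2_eq_square)
  thus ?thesis by (simp add: vinner_def sum_dimA sum_atMost_m wt_def power2_eq_square)
qed

lemma vin_A: "vinner N x (mvec N A x) = (\<Sum>j\<le>m. CC j * wt x j)"
proof -
  have "(\<Sum>j<m. CC j * wt x j) = (\<Sum>j<m. x (2*j) * mvec N A x (2*j) + x (Suc (2*j)) * mvec N A x (Suc (2*j)))"
    apply (intro sum.cong refl)
    apply (simp add: wt_def CC_def mvA0 mvA1)
    apply (simp add: power2_eq_square algebra_simps)
    done
  moreover have "of_bool t * (x (2*m) * mvec N A x (2*m)) = CC m * wt x m"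
    using mvA2[of x] unfolding CC_def wt_def by (cases t) (auto simp: power2_eq_square)
  ultimately show ?thesis by (simp add: vinner_def sum_dimA sum_atMost_m)
qed

lemma half_A: "j \<le> m \<Longrightarrow> wt (\<lambda>i. mvec N A x i - a * x i) j = F a (CC j) * wt x j"
proof -
  assume j: "j \<le> m"
  show ?thesis
  proof (cases "j < m")
    case True
    have r: "(c j)\<^sup>2 + (s j)\<^sup>2 = 1" using rot[OF True] by simp
    have "(c j * x (2*j) + s j * x (Suc (2*j)) - a * x (2*j))\<^sup>2 + (- s j * x (2*j) + c j * x (Suc (2*j)) - a * x (Suc (2*j)))\<^sup>2
       = (1 + a\<^sup>2 - 2*a*c j) * ((x (2*j))\<^sup>2 + (x (Suc (2*j)))\<^sup>2)"
      using r by algebra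
    thus ?thesis using True by (simp add: wt_def F_def CC_def mvA0 mvA1)
  next
    case False
    hence "j = m" using j by simp
    have z: "t \<Longrightarrow> mvec N A x (2*m) = x (2*m)" by (rule mvA2)
    show ?thesis unfolding wt_def F_def CC_def using \<open>j = m\<close> z
      by (cases t) (simp_all add: power2_eq_square algebra_simps)
  qed
qed

lemma half_T: "j \<le> m \<Longrightarrow> wt (\<lambda>i. mvec N (mtrans A) x i - a * x i) j = F a (CC j) * wt x j"
proof -
  assume j: "j \<le> m"
  show ?thesis
  proof (cases "j < m")
    case True
    have r: "(c j)\<^sup>2 + (s j)\<^sup>2 = 1" using rot[OF True] by simp
    have "(c j * x (2*j) - s j * x (Suc (2*j)) - a * x (2*j))\<^sup>2 + (s j * x (2*j) + c j * x (Suc (2*j)) - a * x (Suc (2*j)))\<^sup>2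
       = (1 + a\<^sup>2 - 2*a*c j) * ((x (2*j))\<^sup>2 + (x (Suc (2*j)))\<^sup>2)"
      using r by algebra
    thus ?thesis using True by (simp add: wt_def F_def CC_def mvT0 mvT1)
  next
    case False
    hence "j = m" using j by simp
    have z: "t \<Longrightarrow> mvec N (mtrans A) x (2*m) = x (2*m)" by (rule mvT2)
    show ?thesis unfolding wt_def F_def CC_def using \<open>j = m\<close> z
      by (cases t) (simp_all add: power2_eq_square algebra_simps)
  qed
qed

lemma wt_scale: "wt (\<lambda>i. y i / r) j = wt y j / r\<^sup>2"
  by (simp add: wt_def power_divide add_divide_distrib)


lemma c0_pos: "0 < m \<Longrightarrow> 0 < c 0" by (rule cpos)

lemma c_lt1: "j < m \<Longrightarrow> c j < 1"
proof -
  assume j: "j < m"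
  have "(c j)\<^sup>2 < 1" using rot[OF j] snz[OF j] by (smt (verit) not_sum_power2_lt_zero power2_less_0 zero_less_power2)
  thus ?thesis by (smt (verit) one_le_power)
qed

lemma c_ge0: "j < m \<Longrightarrow> c 0 \<le> c j"
  using cinc[of 0 j] by (cases j) auto

lemma CC_ge: "0 < m \<Longrightarrow> c 0 \<le> CC j"
  using c_ge0 c_lt1[of 0] by (auto simp: CC_def)
lemma CC_le1: "CC j \<le> 1"
  using c_lt1 by (auto simp: CC_def less_imp_le)
lemma CC_mono: "i < j \<Longrightarrow> j \<le> m \<Longrightarrow> CC i < CC j"
  using cinc c_lt1 by (auto simp: CC_def)
lemma CC_pos: "0 < m \<Longrightarrow> 0 < CC j"
  using CC_ge[of j] c0_pos by force

lemma F_nonneg: "0 \<le> cc \<Longrightarrow> cc \<le> 1 \<Longrightarrow> 0 \<le> F a cc"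
proof -
  assume "0 \<le> cc" "cc \<le> 1"
  hence "cc * cc \<le> 1" by (simp add: mult_le_one)
  moreover have "F a cc = (a - cc)\<^sup>2 + (1 - cc * cc)" by (simp add: F_def power2_eq_square algebra_simps)
  ultimately show ?thesis by (smt (verit) zero_le_power2)
qed

lemma F_pos: "0 \<le> cc \<Longrightarrow> cc < 1 \<Longrightarrow> 0 < F a cc"
proof -
  assume "0 \<le> cc" "cc < 1"
  hence "cc * cc \<le> cc * 1" by (intro mult_left_mono) auto
  hence "cc * cc < 1" using \<open>cc < 1\<close> by linarith
  moreover have "F a cc = (a - cc)\<^sup>2 + (1 - cc * cc)" by (simp add: F_def power2_eq_square algebra_simps)
  ultimately show ?thesis by (smt (verit) zero_le_power2)
qed

lemma step:
  assumes j0: "j0 < m" and p_nn: "\<forall>j\<le>m. 0 \<le> p j" and psum: "(\<Sum>j\<le>m. p j) = 1"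
    and ppos: "0 < p j0" and plow: "\<forall>j<j0. p j = 0"
    and a: "a = (\<Sum>j\<le>m. CC j * p j)"
    and q: "\<forall>j\<le>m. q j = F a (CC j) * p j / (\<Sum>l\<le>m. F a (CC l) * p l)"
  shows "(\<forall>j\<le>m. 0 \<le> q j) \<and> (\<Sum>j\<le>m. q j) = 1 \<and> 0 < q j0 \<and> (\<forall>j<j0. q j = 0) \<and>
         c 0 \<le> a \<and> a \<le> 1 \<and>
         (\<forall>j. j0 < j \<and> j \<le> m \<longrightarrow> q j * p j0 \<le> (1 - c 0 * (CC j - CC j0)) * p j * q j0)"
proof -
  have m0: "0 < m" using j0 by simp
  have c0: "0 < c 0" using c0_pos m0 .
  define S where "S = (\<Sum>l\<le>m. F a (CC l) * p l)"
  have "(\<Sum>j\<le>m. c 0 * p j) \<le> (\<Sum>j\<le>m. CC j * p j)"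
    by (intro sum_mono mult_right_mono) (auto simp: CC_ge m0 p_nn)
  hence a_ge: "c 0 \<le> a" using a psum by (simp add: sum_distrib_left[symmetric])
  have "(\<Sum>j\<le>m. CC j * p j) \<le> (\<Sum>j\<le>m. 1 * p j)"
    by (intro sum_mono mult_right_mono) (auto simp: CC_le1 p_nn)
  hence a_le: "a \<le> 1" using a psum by simp
  have a0: "0 \<le> a" using a_ge c0 by simp
  have Fnn: "0 \<le> F a (CC j)" for j using F_nonneg[OF less_imp_le[OF CC_pos[OF m0]] CC_le1] .
  have Fj0: "0 < F a (CC j0)"
  proof -
    have "CC j0 = c j0" using j0 by (simp add: CC_def)
    thus ?thesis using F_pos[of "c j0" a] c_lt1[OF j0] CC_pos[OF m0, of j0] by simp
  qed
  have Fle2: "F a (CC j0) \<le> 2"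
  proof -
    have "0 \<le> a * CC j0" using a0 CC_pos[OF m0, of j0] by simp
    moreover have "a * a \<le> 1" using a0 a_le by (simp add: mult_le_one)
    ultimately show ?thesis by (simp add: F_def power2_eq_square)
  qed
  have "F a (CC j0) * p j0 \<le> S" unfolding S_def
    by (rule member_le_sum[where f="\<lambda>l. F a (CC l) * p l"]) (use j0 p_nn Fnn in auto)
  hence Spos: "0 < S" using Fj0 ppos by (smt (verit) mult_pos_pos)
  have q': "\<forall>j\<le>m. q j = F a (CC j) * p j / S" using q S_def by simp
  have qnn: "\<forall>j\<le>m. 0 \<le> q j" using q' Fnn p_nn Spos by simp
  have "(\<Sum>j\<le>m. q j) = (\<Sum>j\<le>m. F a (CC j) * p j / S)" using q' by (intro sum.cong) auto
  also have "\<dots> = 1" using Spos by (simp add: sum_divide_distrib[symmetric] S_def)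
  finally have qsum: "(\<Sum>j\<le>m. q j) = 1" .
  have qpos: "0 < q j0" using q' j0 Fj0 ppos Spos by simp
  have qlow: "\<forall>j<j0. q j = 0" using q' plow j0 by simp
  have ratio: "q j * p j0 \<le> (1 - c 0 * (CC j - CC j0)) * p j * q j0" if jj: "j0 < j" "j \<le> m" for j
  proof -
    define D where "D = CC j - CC j0"
    have D0: "0 \<le> D" using CC_mono[OF jj] D_def by simp
    have FjF: "F a (CC j) = F a (CC j0) - 2 * a * D" by (simp add: F_def D_def algebra_simps)
    have "c 0 * D * F a (CC j0) \<le> c 0 * D * 2"
      using Fle2 c0 D0 by (intro mult_left_mono) auto
    also have "\<dots> \<le> a * D * 2" using a_ge D0 by (intro mult_right_mono) auto
    finally have key: "F a (CC j) \<le> (1 - c 0 * D) * F a (CC j0)" using FjF by (simp add: algebra_simps)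
    have pp: "0 \<le> p j * p j0 / S" using p_nn jj j0 Spos by simp
    have "q j * p j0 = F a (CC j) * (p j * p j0 / S)" using q' jj by simp
    also have "\<dots> \<le> (1 - c 0 * D) * F a (CC j0) * (p j * p j0 / S)"
      using key pp by (rule mult_right_mono)
    also have "\<dots> = (1 - c 0 * D) * p j * q j0" using q' j0 by simp
    finally show ?thesis by (simp add: D_def)
  qed
  show ?thesis using qnn qsum qpos qlow a_ge a_le ratio by blast
qed


lemma vnorm_sq: "(vnorm N y)\<^sup>2 = (\<Sum>l\<le>m. wt y l)"
proof -
  have "0 \<le> (\<Sum>l\<le>m. wt y l)" by (intro sum_nonneg) (simp add: wt_nonneg)
  thus ?thesis by (simp add: vnorm_def vin_self)
qed

lemma norm_step_A: "j \<le> m \<Longrightarrow> wt (let y = (\<lambda>i. mvec N A x i - a * x i) in (\<lambda>i. y i / vnorm N y)) j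
   = F a (CC j) * wt x j / (\<Sum>l\<le>m. F a (CC l) * wt x l)"
proof -
  assume j: "j \<le> m"
  define y where "y = (\<lambda>i. mvec N A x i - a * x i)"
  have "(\<Sum>l\<le>m. wt y l) = (\<Sum>l\<le>m. F a (CC l) * wt x l)" unfolding y_def by (intro sum.cong) (auto simp: half_A)
  thus ?thesis using j by (simp add: y_def[symmetric] Let_def wt_scale vnorm_sq) (simp add: y_def half_A)
qed

lemma norm_step_T: "j \<le> m \<Longrightarrow> wt (let y = (\<lambda>i. mvec N (mtrans A) x i - a * x i) in (\<lambda>i. y i / vnorm N y)) j
   = F a (CC j) * wt x j / (\<Sum>l\<le>m. F a (CC l) * wt x l)"
proof -
  assume j: "j \<le> m"
  define y where "y = (\<lambda>i. mvec N (mtrans A) x i - a * x i)"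
  have "(\<Sum>l\<le>m. wt y l) = (\<Sum>l\<le>m. F a (CC l) * wt x l)" unfolding y_def by (intro sum.cong) (auto simp: half_T)
  thus ?thesis using j by (simp add: y_def[symmetric] Let_def wt_scale vnorm_sq) (simp add: y_def half_T)
qed

lemma W_eq: "j \<le> m \<Longrightarrow> wt (aci_w N A v0 k) j = F (aci_alpha N A v0 k) (CC j) * wt (aci_v N A v0 k) j /
     (\<Sum>l\<le>m. F (aci_alpha N A v0 k) (CC l) * wt (aci_v N A v0 k) l)"
  unfolding aci_w_eq by (rule norm_step_A)

lemma V_Suc_eq: "j \<le> m \<Longrightarrow> wt (aci_v N A v0 (Suc k)) j = F (aci_beta N A v0 k) (CC j) * wt (aci_w N A v0 k) j /
     (\<Sum>l\<le>m. F (aci_beta N A v0 k) (CC l) * wt (aci_w N A v0 k) l)"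
  unfolding aci_v_Suc by (rule norm_step_T)

lemma alpha_eq: "aci_alpha N A v0 k = (\<Sum>j\<le>m. CC j * wt (aci_v N A v0 k) j)"
  by (simp add: aci_alpha_def vin_A)
lemma beta_eq: "aci_beta N A v0 k = (\<Sum>j\<le>m. CC j * wt (aci_w N A v0 k) j)"
  by (simp add: aci_beta_def vin_A)


lemma conv:
  assumes j0: "j0 < m" and sum0: "(\<Sum>j\<le>m. wt v0 j) = 1" and pos0: "0 < wt v0 j0"
    and low0: "\<forall>j<j0. wt v0 j = 0"
  shows "(\<forall>j\<le>m. (\<lambda>k. wt (aci_v N A v0 k) j) \<longlonglongrightarrow> (if j = j0 then 1 else 0)) \<and>
         (aci_alpha N A v0 \<longlonglongrightarrow> c j0) \<and> (aci_beta N A v0 \<longlonglongrightarrow> c j0)"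
proof -
  define V where "V k j = wt (aci_v N A v0 k) j" for k j
  define W where "W k j = wt (aci_w N A v0 k) j" for k j
  define al where "al = aci_alpha N A v0"
  define be where "be = aci_beta N A v0"
  define \<rho> where "\<rho> j = 1 - c 0 * (CC j - CC j0)" for j
  have m0: "0 < m" using j0 by simp
  have c0: "0 < c 0" using c0_pos[OF m0] .
  have c01: "c 0 < 1" using c_lt1[OF m0] .
  have Vnn: "0 \<le> V k j" for k j by (simp add: V_def wt_nonneg)
  have Wnn: "0 \<le> W k j" for k j by (simp add: W_def wt_nonneg)
  have SW: "(\<Sum>j\<le>m. W k j) = 1 \<and> 0 < W k j0 \<and> (\<forall>j<j0. W k j = 0) \<and>
      (\<forall>j. j0 < j \<and> j \<le> m \<longrightarrow> W k j * V k j0 \<le> \<rho> j * V k j * W k j0)"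
    if "(\<Sum>j\<le>m. V k j) = 1" "0 < V k j0" "\<forall>j<j0. V k j = 0" for k
  proof -
    have "(\<forall>j\<le>m. 0 \<le> W k j) \<and> (\<Sum>j\<le>m. W k j) = 1 \<and> 0 < W k j0 \<and> (\<forall>j<j0. W k j = 0) \<and>
         c 0 \<le> al k \<and> al k \<le> 1 \<and>
         (\<forall>j. j0 < j \<and> j \<le> m \<longrightarrow> W k j * V k j0 \<le> (1 - c 0 * (CC j - CC j0)) * V k j * W k j0)"
      by (rule step[OF j0]) (use that Vnn in \<open>auto simp: al_def V_def W_def alpha_eq W_eq\<close>)
    thus ?thesis by (simp add: \<rho>_def)
  qed
  have SV: "(\<Sum>j\<le>m. V (Suc k) j) = 1 \<and> 0 < V (Suc k) j0 \<and> (\<forall>j<j0. V (Suc k) j = 0) \<and>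
      (\<forall>j. j0 < j \<and> j \<le> m \<longrightarrow> V (Suc k) j * W k j0 \<le> \<rho> j * W k j * V (Suc k) j0)"
    if "(\<Sum>j\<le>m. W k j) = 1" "0 < W k j0" "\<forall>j<j0. W k j = 0" for k
  proof -
    have "(\<forall>j\<le>m. 0 \<le> V (Suc k) j) \<and> (\<Sum>j\<le>m. V (Suc k) j) = 1 \<and> 0 < V (Suc k) j0 \<and> (\<forall>j<j0. V (Suc k) j = 0) \<and>
         c 0 \<le> be k \<and> be k \<le> 1 \<and>
         (\<forall>j. j0 < j \<and> j \<le> m \<longrightarrow> V (Suc k) j * W k j0 \<le> (1 - c 0 * (CC j - CC j0)) * W k j * V (Suc k) j0)"
      by (rule step[OF j0]) (use that Wnn in \<open>auto simp: be_def V_def W_def beta_eq V_Suc_eq\<close>)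
    thus ?thesis by (simp add: \<rho>_def)
  qed
  have inv: "(\<Sum>j\<le>m. V k j) = 1 \<and> 0 < V k j0 \<and> (\<forall>j<j0. V k j = 0)" for k
  proof (induction k)
    case 0 thus ?case using sum0 pos0 low0 by (simp add: V_def aci_v0)
  next
    case (Suc k) thus ?case using SV SW by blast
  qed
  have invW: "(\<Sum>j\<le>m. W k j) = 1 \<and> 0 < W k j0 \<and> (\<forall>j<j0. W k j = 0)" for k
    using SW inv by blast
  have le1: "V k j \<le> 1" "W k j \<le> 1" if "j \<le> m" for k j
  proof -
    have "V k j \<le> (\<Sum>j\<le>m. V k j)" by (rule member_le_sum) (use that Vnn in auto)
    thus "V k j \<le> 1" using inv by simp
    have "W k j \<le> (\<Sum>j\<le>m. W k j)" by (rule member_le_sum) (use that Wnn in auto)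
    thus "W k j \<le> 1" using invW by simp
  qed
  have rho: "0 \<le> \<rho> j" "\<rho> j < 1" if "j0 < j" "j \<le> m" for j
  proof -
    have D: "0 < CC j - CC j0" "CC j - CC j0 \<le> 1" using CC_mono[OF that] CC_le1[of j] CC_pos[OF m0, of j0] by auto
    have "c 0 * (CC j - CC j0) \<le> c 0 * 1" using D c0 by (intro mult_left_mono) auto
    thus "0 \<le> \<rho> j" using c01 by (simp add: \<rho>_def)
    show "\<rho> j < 1" using D c0 by (simp add: \<rho>_def)
  qed
  have Wle: "W k j \<le> \<rho> j * (V k j / V k j0)" if "j0 < j" "j \<le> m" for k j
  proof -
    have h: "W k j * V k j0 \<le> \<rho> j * V k j * W k j0" using SW inv that by blast
    have "\<rho> j * V k j * W k j0 \<le> \<rho> j * V k j * 1"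
      using le1[of j0 k] j0 rho[OF that] Vnn by (intro mult_left_mono) auto
    hence "W k j * V k j0 \<le> \<rho> j * V k j" using h by simp
    thus ?thesis using inv[of k] by (simp add: field_simps)
  qed
  have Rstep: "V (Suc k) j / V (Suc k) j0 \<le> (\<rho> j)\<^sup>2 * (V k j / V k j0)" if "j0 < j" "j \<le> m" for k j
  proof -
    have h1: "W k j * V k j0 \<le> \<rho> j * V k j * W k j0" using SW inv that by blast
    have h2: "V (Suc k) j * W k j0 \<le> \<rho> j * W k j * V (Suc k) j0" using SV invW that by blast
    have p1: "0 < V k j0" "0 < W k j0" "0 < V (Suc k) j0" using inv invW by auto
    have r1: "W k j / W k j0 \<le> \<rho> j * (V k j / V k j0)" using h1 p1 by (simp add: field_simps)
    have r2: "V (Suc k) j / V (Suc k) j0 \<le> \<rho> j * (W k j / W k j0)" using h2 p1 by (simp add: field_simps)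
    also have "\<dots> \<le> \<rho> j * (\<rho> j * (V k j / V k j0))" using r1 rho[OF that] by (intro mult_left_mono) auto
    finally show ?thesis by (simp add: power2_eq_square mult.assoc)
  qed
  have Rbound: "V k j / V k j0 \<le> ((\<rho> j)\<^sup>2) ^ k * (V 0 j / V 0 j0)" if "j0 < j" "j \<le> m" for k j
  proof (induction k)
    case 0 thus ?case by simp
  next
    case (Suc k)
    have "V (Suc k) j / V (Suc k) j0 \<le> (\<rho> j)\<^sup>2 * (V k j / V k j0)" using Rstep that by blast
    also have "\<dots> \<le> (\<rho> j)\<^sup>2 * (((\<rho> j)\<^sup>2) ^ k * (V 0 j / V 0 j0))" using Suc by (intro mult_left_mono) auto
    finally show ?case by (simp add: mult.assoc)
  qed
  have lim0: "(\<lambda>k. ((\<rho> j)\<^sup>2) ^ k * (V 0 j / V 0 j0)) \<longlonglongrightarrow> 0" if "j0 < j" "j \<le> m" for j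
  proof -
    have "norm ((\<rho> j)\<^sup>2) < 1" using rho[OF that]
      by (simp add: abs_if) (metis abs_of_nonneg abs_square_less_1 less_eq_real_def)
    from tendsto_mult[OF LIMSEQ_power_zero[OF this] tendsto_const[of "V 0 j / V 0 j0"]]
    show ?thesis by simp
  qed
  have Vlim_hi: "(\<lambda>k. V k j) \<longlonglongrightarrow> 0" "(\<lambda>k. W k j) \<longlonglongrightarrow> 0" if "j0 < j" "j \<le> m" for j
  proof -
    have b1: "V k j \<le> V k j / V k j0" for k
    proof -
      have "V k j * V k j0 \<le> V k j * 1" using le1[of j0 k] j0 Vnn by (intro mult_left_mono) auto
      thus ?thesis using inv[of k] by (simp add: field_simps)
    qed
    have b1': "V k j \<le> ((\<rho> j)\<^sup>2) ^ k * (V 0 j / V 0 j0)" for k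
      using b1[of k] Rbound[OF that, of k] by linarith
    show "(\<lambda>k. V k j) \<longlonglongrightarrow> 0"
      by (rule tendsto_sandwich[OF _ _ tendsto_const lim0[OF that]])
         (use Vnn b1' in \<open>auto intro: always_eventually\<close>)
    have b2: "W k j \<le> \<rho> j * (((\<rho> j)\<^sup>2) ^ k * (V 0 j / V 0 j0))" for k
      using Wle[OF that, of k] Rbound[OF that, of k] rho[OF that]
      by (meson mult_left_mono order_trans)
    have "(\<lambda>k. \<rho> j * (((\<rho> j)\<^sup>2) ^ k * (V 0 j / V 0 j0))) \<longlonglongrightarrow> \<rho> j * 0"
      by (intro tendsto_mult tendsto_const lim0[OF that])
    hence l2: "(\<lambda>k. \<rho> j * (((\<rho> j)\<^sup>2) ^ k * (V 0 j / V 0 j0))) \<longlonglongrightarrow> 0" by simp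
    show "(\<lambda>k. W k j) \<longlonglongrightarrow> 0"
      by (rule tendsto_sandwich[OF _ _ tendsto_const l2])
         (use Wnn b2 in \<open>auto intro: always_eventually\<close>)
  qed
  have Vlim_ne: "(\<lambda>k. V k j) \<longlonglongrightarrow> 0" "(\<lambda>k. W k j) \<longlonglongrightarrow> 0" if "j \<noteq> j0" "j \<le> m" for j
  proof -
    show "(\<lambda>k. V k j) \<longlonglongrightarrow> 0"
    proof (cases "j < j0")
      case True thus ?thesis using inv by simp
    next
      case False thus ?thesis using Vlim_hi that by simp
    qed
    show "(\<lambda>k. W k j) \<longlonglongrightarrow> 0"
    proof (cases "j < j0")
      case True thus ?thesis using invW by simp
    next
      case False thus ?thesis using Vlim_hi that by simp
    qed
  qed
  have fin: "finite ({..m} - {j0})" by simp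
  have j0m: "j0 \<in> {..m}" using j0 by simp
  have Vj0: "V k j0 = 1 - (\<Sum>j\<in>{..m} - {j0}. V k j)" "W k j0 = 1 - (\<Sum>j\<in>{..m} - {j0}. W k j)" for k
    using inv[of k] invW[of k] sum.remove[OF _ j0m, of "V k"] sum.remove[OF _ j0m, of "W k"] by auto
  have sl: "(\<lambda>k. \<Sum>j\<in>{..m} - {j0}. V k j) \<longlonglongrightarrow> 0" "(\<lambda>k. \<Sum>j\<in>{..m} - {j0}. W k j) \<longlonglongrightarrow> 0"
    using tendsto_sum[of "{..m} - {j0}" "\<lambda>j k. V k j" "\<lambda>j. 0" sequentially]
          tendsto_sum[of "{..m} - {j0}" "\<lambda>j k. W k j" "\<lambda>j. 0" sequentially] Vlim_ne by auto
  have Vl: "(\<lambda>k. V k j) \<longlonglongrightarrow> (if j = j0 then 1 else 0)" "(\<lambda>k. W k j) \<longlonglongrightarrow> (if j = j0 then 1 else 0)"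
    if "j \<le> m" for j
  proof -
    show "(\<lambda>k. V k j) \<longlonglongrightarrow> (if j = j0 then 1 else 0)"
    proof (cases "j = j0")
      case True
      have "(\<lambda>k. 1 - (\<Sum>j\<in>{..m} - {j0}. V k j)) \<longlonglongrightarrow> 1 - 0" by (intro tendsto_diff tendsto_const sl)
      thus ?thesis using True Vj0 by simp
    next
      case False thus ?thesis using Vlim_ne that by simp
    qed
    show "(\<lambda>k. W k j) \<longlonglongrightarrow> (if j = j0 then 1 else 0)"
    proof (cases "j = j0")
      case True
      have "(\<lambda>k. 1 - (\<Sum>j\<in>{..m} - {j0}. W k j)) \<longlonglongrightarrow> 1 - 0" by (intro tendsto_diff tendsto_const sl)
      thus ?thesis using True Vj0 by simp
    next
      case False thus ?thesis using Vlim_ne that by simp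
    qed
  qed
  have CCsum: "(\<Sum>j\<le>m. CC j * (if j = j0 then 1 else 0)) = c j0"
  proof -
    have "(\<Sum>j\<le>m. CC j * (if j = j0 then 1 else 0)) = (\<Sum>j\<le>m. if j = j0 then CC j else 0)"
      by (intro sum.cong) auto
    also have "\<dots> = (if j0 \<in> {..m} then CC j0 else 0)" by (rule sum.delta) simp
    finally show ?thesis using j0 by (simp add: CC_def)
  qed
  have "(\<lambda>k. \<Sum>j\<le>m. CC j * V k j) \<longlonglongrightarrow> (\<Sum>j\<le>m. CC j * (if j = j0 then 1 else 0))"
    by (intro tendsto_sum tendsto_mult tendsto_const) (use Vl in auto)
  moreover have "aci_alpha N A v0 = (\<lambda>k. \<Sum>j\<le>m. CC j * V k j)" by (simp add: fun_eq_iff alpha_eq V_def)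
  ultimately have A1: "aci_alpha N A v0 \<longlonglongrightarrow> c j0" using CCsum by simp
  have "(\<lambda>k. \<Sum>j\<le>m. CC j * W k j) \<longlonglongrightarrow> (\<Sum>j\<le>m. CC j * (if j = j0 then 1 else 0))"
    by (intro tendsto_sum tendsto_mult tendsto_const) (use Vl in auto)
  moreover have "aci_beta N A v0 = (\<lambda>k. \<Sum>j\<le>m. CC j * W k j)" by (simp add: fun_eq_iff beta_eq W_def)
  ultimately have A2: "aci_beta N A v0 \<longlonglongrightarrow> c j0" using CCsum by simp
  show ?thesis using A1 A2 Vl(1) by (simp add: V_def)
qed


lemma idx_cases: "i < N \<Longrightarrow> (\<exists>j<m. i = 2*j) \<or> (\<exists>j<m. i = Suc (2*j)) \<or> (t \<and> i = 2*m)"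
proof -
  assume i: "i < N"
  show ?thesis
  proof (cases "even i")
    case True
    then obtain j where j: "i = 2*j" by (auto elim: evenE)
    thus ?thesis using i by (cases t) (auto simp: dimA_def)
  next
    case False
    then obtain j where j: "i = Suc (2*j)" by (metis oddE Suc_eq_plus1)
    thus ?thesis using i by (cases t) (auto simp: dimA_def)
  qed
qed

lemma pm1: "degree p = 1 \<Longrightarrow> poly_mvec N p A x i = coeff p 0 * x i + coeff p 1 * mvec N A x i"
  by (simp add: poly_mvec_def)
lemma pm0: "degree p = 0 \<Longrightarrow> poly_mvec N p A x i = coeff p 0 * x i"
  by (simp add: poly_mvec_def)
lemma pm2: "degree p = 2 \<Longrightarrow> poly_mvec N p A x i = coeff p 0 * x i + coeff p 1 * mvec N A x i + coeff p 2 * mvec N A (mvec N A x) i"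
  by (simp add: poly_mvec_def numeral_2_eq_2)

lemma grade_le1:
  assumes z: "\<forall>j<m. wt x j = 0"
  shows "grade N A x \<le> 1"
proof -
  have zz: "x (2*j) = 0" "x (Suc (2*j)) = 0" if "j < m" for j
    using z that by (auto simp: wt_def add_nonneg_eq_0_iff)
  let ?p = "[:-1, 1:] :: real poly"
  have "\<forall>i<N. poly_mvec N ?p A x i = 0"
  proof (intro allI impI)
    fix i assume i: "i < N"
    have pe: "poly_mvec N ?p A x i = - x i + mvec N A x i" by (subst pm1) simp_all
    from idx_cases[OF i] show "poly_mvec N ?p A x i = 0"
      unfolding pe using zz mvA0 mvA1 mvA2 by auto
  qed
  hence "\<exists>p. lead_coeff p = 1 \<and> degree p = 1 \<and> (\<forall>i<N. poly_mvec N p A x i = 0)"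
    by (intro exI[of _ ?p]) simp
  thus ?thesis unfolding grade_def by (rule Least_le)
qed

lemma grade_two:
  assumes j0: "j0 < m" and one: "wt x j0 = 1" and z: "\<forall>j\<le>m. j \<noteq> j0 \<longrightarrow> wt x j = 0"
  shows "grade N A x = 2"
proof -
  have zz: "x (2*j) = 0" "x (Suc (2*j)) = 0" if "j < m" "j \<noteq> j0" for j
    using z[rule_format, of j] that by (auto simp: wt_def add_nonneg_eq_0_iff)
  have zm: "t \<Longrightarrow> x (2*m) = 0"
  proof -
    assume tt: t
    have "wt x m = 0" using z j0 by simp
    hence "(x (2*m))\<^sup>2 = 0" using tt unfolding wt_def by simp
    thus ?thesis by simp
  qed
  have one': "(x (2*j0))\<^sup>2 + (x (Suc (2*j0)))\<^sup>2 = 1" using one j0 by (simp add: wt_def)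
  have r0: "(c j0)\<^sup>2 + (s j0)\<^sup>2 = 1" using rot[OF j0] .
  have s0: "s j0 \<noteq> 0" using snz[OF j0] .
  let ?p = "[:1, -2 * c j0, 1:] :: real poly"
  have deg: "degree ?p = 2" by simp
  have P2: "\<forall>i<N. poly_mvec N ?p A x i = 0"
  proof (intro allI impI)
    fix i assume i: "i < N"
    have pe: "poly_mvec N ?p A x i = x i - 2 * c j0 * mvec N A x i + mvec N A (mvec N A x) i"
      by (subst pm2[OF deg]) (simp add: numeral_2_eq_2)
    from idx_cases[OF i] show "poly_mvec N ?p A x i = 0"
    proof (elim disjE exE conjE)
      fix j assume j: "j < m" and ij: "i = 2*j"
      show ?thesis
      proof (cases "j = j0")
        case True
        have "x (2*j0) - 2 * c j0 * (c j0 * x (2*j0) + s j0 * x (Suc (2*j0)))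
           + (c j0 * (c j0 * x (2*j0) + s j0 * x (Suc (2*j0))) + s j0 * (- s j0 * x (2*j0) + c j0 * x (Suc (2*j0)))) = 0"
          using r0 by algebra
        moreover have "poly_mvec N ?p A x i = x (2*j0) - 2 * c j0 * (c j0 * x (2*j0) + s j0 * x (Suc (2*j0)))
           + (c j0 * (c j0 * x (2*j0) + s j0 * x (Suc (2*j0))) + s j0 * (- s j0 * x (2*j0) + c j0 * x (Suc (2*j0))))"
          using pe by (simp add: ij True mvA0 mvA1 j0)
        ultimately show ?thesis by simp
      next
        case False
        thus ?thesis using j zz[OF j False] pe by (simp add: ij mvA0 mvA1)
      qed
    next
      fix j assume j: "j < m" and ij: "i = Suc (2*j)"
      show ?thesis
      proof (cases "j = j0")
        case True
        have "x (Suc (2*j0)) - 2 * c j0 * (- s j0 * x (2*j0) + c j0 * x (Suc (2*j0)))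
           + (- s j0 * (c j0 * x (2*j0) + s j0 * x (Suc (2*j0))) + c j0 * (- s j0 * x (2*j0) + c j0 * x (Suc (2*j0)))) = 0"
          using r0 by algebra
        moreover have "poly_mvec N ?p A x i = x (Suc (2*j0)) - 2 * c j0 * (- s j0 * x (2*j0) + c j0 * x (Suc (2*j0)))
           + (- s j0 * (c j0 * x (2*j0) + s j0 * x (Suc (2*j0))) + c j0 * (- s j0 * x (2*j0) + c j0 * x (Suc (2*j0))))"
          using pe by (simp add: ij True mvA0 mvA1 j0)
        ultimately show ?thesis by simp
      next
        case False
        thus ?thesis using j zz[OF j False] pe by (simp add: ij mvA0 mvA1)
      qed
    next
      assume tt: t and ij: "i = 2*m"
      show ?thesis using pe mvA2[OF tt] mvA2[OF tt, of "mvec N A x"] zm[OF tt] by (simp add: ij)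
    qed
  qed
  have i0: "2*j0 < N" "Suc (2*j0) < N" using j0 by (auto simp: dimA_def)
  show ?thesis unfolding grade_def
  proof (rule Least_equality)
    show "\<exists>p. lead_coeff p = 1 \<and> degree p = 2 \<and> (\<forall>i<N. poly_mvec N p A x i = 0)"
      using P2 by (intro exI[of _ ?p]) simp
  next
    fix d assume "\<exists>p. lead_coeff p = 1 \<and> degree p = d \<and> (\<forall>i<N. poly_mvec N p A x i = 0)"
    then obtain p where lc: "lead_coeff p = 1" and dp: "degree p = d" and pz: "\<forall>i<N. poly_mvec N p A x i = 0" by blast
    show "2 \<le> d"
    proof (rule ccontr)
      assume "\<not> 2 \<le> d"
      hence "d = 0 \<or> d = 1" by auto
      thus False
      proof
        assume d0: "d = 0"
        have "x (2*j0) = 0" "x (Suc (2*j0)) = 0"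
          using pz i0 pm0[of p x] lc dp d0 by auto
        thus False using one' by simp
      next
        assume d1: "d = 1"
        define b where "b = coeff p 0"
        have c1: "coeff p 1 = 1" using lc dp d1 by simp
        have q1: "poly_mvec N p A x (2*j0) = 0" "poly_mvec N p A x (Suc (2*j0)) = 0" using pz i0 by auto
        have e1: "b * x (2*j0) + (c j0 * x (2*j0) + s j0 * x (Suc (2*j0))) = 0"
          using q1(1) unfolding pm1[OF dp[unfolded d1]] c1 mvA0[OF j0] b_def by simp
        have e2: "b * x (Suc (2*j0)) + (- s j0 * x (2*j0) + c j0 * x (Suc (2*j0))) = 0"
          using q1(2) unfolding pm1[OF dp[unfolded d1]] c1 mvA1[OF j0] b_def by simp
        have "s j0 * ((x (2*j0))\<^sup>2 + (x (Suc (2*j0)))\<^sup>2) = 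
              x (Suc (2*j0)) * (b * x (2*j0) + (c j0 * x (2*j0) + s j0 * x (Suc (2*j0))))
              - x (2*j0) * (b * x (Suc (2*j0)) + (- s j0 * x (2*j0) + c j0 * x (Suc (2*j0))))"
          by (simp add: power2_eq_square algebra_simps)
        hence "s j0 = 0" using e1 e2 one' by simp
        thus False using s0 by simp
      qed
    qed
  qed
qed


lemma wt_lim:
  assumes r: "\<forall>i<N. (\<lambda>k. X k i) \<longlonglongrightarrow> vs i" and j: "j \<le> m"
  shows "(\<lambda>k. wt (X k) j) \<longlonglongrightarrow> wt vs j"
proof (cases "j < m")
  case True
  have "2*j < N" "Suc (2*j) < N" using True by (auto simp: dimA_def)
  hence "(\<lambda>k. (X k (2*j))\<^sup>2 + (X k (Suc (2*j)))\<^sup>2) \<longlonglongrightarrow> (vs (2*j))\<^sup>2 + (vs (Suc (2*j)))\<^sup>2"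
    using r by (intro tendsto_add tendsto_power) auto
  thus ?thesis using True by (simp add: wt_def)
next
  case False
  show ?thesis
  proof (cases t)
    case True
    have "2*m < N" using True by (simp add: dimA_def)
    hence "(\<lambda>k. (X k (2*m))\<^sup>2) \<longlonglongrightarrow> (vs (2*m))\<^sup>2" using r by (intro tendsto_power) auto
    thus ?thesis using False True unfolding wt_def by simp
  next
    case f: False
    show ?thesis using False f unfolding wt_def by simp
  qed
qed

end

theorem lemma4p4:
  fixes m :: nat and t :: bool and c s :: "nat \<Rightarrow> real" and v0 :: "nat \<Rightarrow> real"
  defines "n \<equiv> dimA m t" and "A \<equiv> rotA m t c s"
  assumes rot: "\<And>j. j < m \<Longrightarrow> (c j)\<^sup>2 + (s j)\<^sup>2 = 1"
    and snz: "\<And>j. j < m \<Longrightarrow> s j \<noteq> 0"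
    and cpos: "0 < m \<Longrightarrow> 0 < c 0"
    and cinc: "\<And>i j. i < j \<Longrightarrow> j < m \<Longrightarrow> c i < c j"
    and unit: "vnorm n v0 = 1"
    and grade0: "grade n A v0 \<ge> 2"
  shows "\<exists>\<alpha> \<beta>. (aci_alpha n A v0 \<longlonglongrightarrow> \<alpha>) \<and> (aci_beta n A v0 \<longlonglongrightarrow> \<beta>) \<and>
           \<alpha> = \<beta> \<and> (\<exists>j<m. \<alpha> = c j) \<and>
           (\<forall>vs r. strict_mono r \<and> (\<forall>i<n. (\<lambda>k. aci_v n A v0 (r k) i) \<longlonglongrightarrow> vs i)
                 \<longrightarrow> grade n A vs = 2)"
proof -
  interpret rs m t c s using rot snz cpos cinc by unfold_locales auto
  have nN: "n = dimA m t" and aA: "A = rotA m t c s" using n_def A_def by simp_all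
  have ex: "\<exists>j<m. 0 < wt v0 j"
  proof (rule ccontr)
    assume "\<not> (\<exists>j<m. 0 < wt v0 j)"
    hence "\<forall>j<m. wt v0 j = 0" using wt_nonneg by (metis less_eq_real_def)
    hence "grade N (rotA m t c s) v0 \<le> 1" unfolding aA by (rule grade_le1)
    thus False using grade0 nN aA by simp
  qed
  define j0 where "j0 = (LEAST j. j < m \<and> 0 < wt v0 j)"
  have j0: "j0 < m" "0 < wt v0 j0" using LeastI_ex[OF ex] unfolding j0_def by auto
  have low: "\<forall>j<j0. wt v0 j = 0"
  proof (intro allI impI)
    fix j assume "j < j0"
    hence "\<not> (j < m \<and> 0 < wt v0 j)" unfolding j0_def by (rule not_less_Least)
    thus "wt v0 j = 0" using \<open>j < j0\<close> j0(1) wt_nonneg[of v0 j] by auto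
  qed
  have "vinner N v0 v0 = 1" using unit nN by (simp add: vnorm_def)
  hence sum0: "(\<Sum>j\<le>m. wt v0 j) = 1" by (simp add: vin_self)
  note C = conv[OF j0(1) sum0 j0(2) low]
  have L1: "aci_alpha n A v0 \<longlonglongrightarrow> c j0" using C nN aA by simp
  have L2: "aci_beta n A v0 \<longlonglongrightarrow> c j0" using C nN aA by simp
  have G: "\<forall>vs r. strict_mono r \<and> (\<forall>i<n. (\<lambda>k. aci_v n A v0 (r k) i) \<longlonglongrightarrow> vs i)
                 \<longrightarrow> grade n A vs = 2"
  proof (intro allI impI)
    fix vs r
    assume h: "strict_mono r \<and> (\<forall>i<n. (\<lambda>k. aci_v n A v0 (r k) i) \<longlonglongrightarrow> vs i)"
    have lim: "wt vs j = (if j = j0 then 1 else 0)" if j: "j \<le> m" for j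
    proof -
      have "(\<lambda>k. wt (aci_v N (rotA m t c s) v0 (r k)) j) \<longlonglongrightarrow> wt vs j"
        by (rule wt_lim) (use h nN aA j in auto)
      moreover have "((\<lambda>k. wt (aci_v N (rotA m t c s) v0 k) j) \<circ> r) \<longlonglongrightarrow> (if j = j0 then 1 else 0)"
        using LIMSEQ_subseq_LIMSEQ[OF C[THEN conjunct1, rule_format, OF j] h[THEN conjunct1]] .
      ultimately show ?thesis by (simp add: o_def LIMSEQ_unique)
    qed
    have "grade N (rotA m t c s) vs = 2"
      by (rule grade_two[OF j0(1)]) (use lim j0 in auto)
    thus "grade n A vs = 2" using nN aA by simp
  qed
  show ?thesis using L1 L2 G j0(1) by blast
qed
end
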